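(* Let $L$ be an ultraparacompact locale with $\bot\neq\top$, $B$ its Boolean algebra of complemented opens, $\mathcal{J}$ the set of partitions of $L$, and $F$ a $B_{\mathcal{J}}$-set with étale space $\sigma\colon E(F)\to L$. Then the space of points $\mathrm{pt}\,E(F)$ is homeomorphic to $\sum_{p\in\mathrm{pt}L}|F|/{\equiv_p}$, where $x\equiv_p y$ iff there is $b\in B$ with $p\in b$ and $x\equiv_b y$, equipped with the topology generated by the subbasic open sets $[x\,|\,b]=\{[x]_p: p\in b\}$ for $x\in|F|$, $b\in B$.
   Context: Partitions of $L$: sets $P$ of opens, pairwise disjoint ($u\wedge v=\bot$ for $u\neq v$), not containing $\bot$, with $\bigvee P=\top$; their members are complemented. $L$ ultraparacompact: every open is a join of complemented opens and every cover is refined by a partition. A $B_{\mathcal{J}}$-set $F$ is a set $|F|$ with binary operations $b(-,-)$ for $b\in B$ satisfying $b(x,x)=x$, $b(b(x,y),z)=b(x,z)$, $b(x,b(y,z))=b(x,z)$, $\top(x,y)=x$, $(\neg b)(x,y)=b(y,x)$, $(b\wedge c)(x,y)=b(c(x,y),y)$, and operations $P\colon|F|^P\to|F|$ for each $P\in\mathcal{J}$ satisfying $P(\lambda b.z)=z$, $P(\lambda b.b(x_b,y_b))=P(\lambda b.x_b)$, $b(P(x),x_b)=x_b$ for $b\in P$. For $b\in B$, $x\equiv_b y$ iff $b(x,y)=y$. $\mathcal{O}(L)$ is a $B_{\mathcal{J}}$-set with $b(u,v)=(b\wedge u)\vee(\neg b\wedge v)$ and $P(\lambda b.u_b)=\bigvee_{b\in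 P}(b\wedge u_b)$. The étale space $E(F)$ is the locale whose frame is the set of $B_{\mathcal{J}}$-set homomorphisms $F\to\mathcal{O}(L)$ ordered pointwise, and $\sigma^{-1}(u)=\mathrm{const}_u$. A point $p$ of $L$ is a frame map $\mathcal{O}(L)\to\{\bot,\top\}$; $p\in b$ means $p(b)=\top$. $[x]_p$ is the $\equiv_p$-class of $x$ in the fibre over $p$. *)

theory Defs
  imports "HOL-Analysis.Analysis"
begin

definition frame_law :: "'a::complete_lattice itself \<Rightarrow> bool" where
  "frame_law _ \<longleftrightarrow> (\<forall>(a::'a) S. inf a (Sup S) = Sup ((\<lambda>s. inf a s) ` S))"

definition complemented :: "'a::complete_lattice \<Rightarrow> bool" where
  "complemented b \<longleftrightarrow> (\<exists>c. inf b c = bot \<and> sup b c = top)"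

definition compl_opens :: "'a::complete_lattice set" where
  "compl_opens = {b. complemented b}"

text \<open>The complement of a complemented open (unique in a distributive lattice).\<close>
definition lcompl :: "'a::complete_lattice \<Rightarrow> 'a" where
  "lcompl b = (THE c. inf b c = bot \<and> sup b c = top)"

definition is_partition :: "'a::complete_lattice set \<Rightarrow> bool" where
  "is_partition P \<longleftrightarrow> (\<forall>u\<in>P. \<forall>v\<in>P. u \<noteq> v \<longrightarrow> inf u v = bot) \<and> bot \<notin> P \<and> Sup P = top"

definition partitions :: "'a::complete_lattice set set" where
  "partitions = {P. is_partition P}"

definition ultraparacompact :: "'a::complete_lattice itself \<Rightarrow> bool" where
  "ultraparacompact _ \<longleftrightarrow>
     (\<forall>u::'a. \<exists>S \<subseteq> compl_opens. u = Sup S) \<and>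
     (\<forall>S::'a set. Sup S = top \<longrightarrow> (\<exists>P\<in>partitions. \<forall>v\<in>P. \<exists>u\<in>S. v \<le> u))"

text \<open>A B_J-set: carrier C, binary operations bop b (b in B), and operations pop P
  (P in J) acting on families in C^P (extensional functions on P).\<close>
definition BJ_set :: "'x set \<Rightarrow> ('a::complete_lattice \<Rightarrow> 'x \<Rightarrow> 'x \<Rightarrow> 'x)
     \<Rightarrow> ('a set \<Rightarrow> ('a \<Rightarrow> 'x) \<Rightarrow> 'x) \<Rightarrow> bool" where
  "BJ_set C bop pop \<longleftrightarrow>
     (\<forall>b\<in>compl_opens. \<forall>x\<in>C. \<forall>y\<in>C. bop b x y \<in> C) \<and>
     (\<forall>P\<in>partitions. \<forall>xs\<in>P \<rightarrow>\<^sub>E C. pop P xs \<in> C) \<and>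
     (\<forall>b\<in>compl_opens. \<forall>x\<in>C. bop b x x = x) \<and>
     (\<forall>b\<in>compl_opens. \<forall>x\<in>C. \<forall>y\<in>C. \<forall>z\<in>C. bop b (bop b x y) z = bop b x z) \<and>
     (\<forall>b\<in>compl_opens. \<forall>x\<in>C. \<forall>y\<in>C. \<forall>z\<in>C. bop b x (bop b y z) = bop b x z) \<and>
     (\<forall>x\<in>C. \<forall>y\<in>C. bop top x y = x) \<and>
     (\<forall>b\<in>compl_opens. \<forall>x\<in>C. \<forall>y\<in>C. bop (lcompl b) x y = bop b y x) \<and>
     (\<forall>b\<in>compl_opens. \<forall>c\<in>compl_opens. \<forall>x\<in>C. \<forall>y\<in>C.
         bop (inf b c) x y = bop b (bop c x y) y) \<and>
     (\<forall>P\<in>partitions. \<forall>z\<in>C. pop P (\<lambda>b\<in>P. z) = z) \<and>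
     (\<forall>P\<in>partitions. \<forall>xs\<in>P \<rightarrow>\<^sub>E C. \<forall>ys\<in>P \<rightarrow>\<^sub>E C.
         pop P (\<lambda>b\<in>P. bop b (xs b) (ys b)) = pop P xs) \<and>
     (\<forall>P\<in>partitions. \<forall>xs\<in>P \<rightarrow>\<^sub>E C. \<forall>b\<in>P. bop b (pop P xs) (xs b) = xs b)"

definition OL_bop :: "'a::complete_lattice \<Rightarrow> 'a \<Rightarrow> 'a \<Rightarrow> 'a" where
  "OL_bop b u v = sup (inf b u) (inf (lcompl b) v)"

definition OL_pop :: "'a::complete_lattice set \<Rightarrow> ('a \<Rightarrow> 'a) \<Rightarrow> 'a" where
  "OL_pop P us = Sup ((\<lambda>b. inf b (us b)) ` P)"

definition BJ_hom :: "'x set \<Rightarrow> ('a::complete_lattice \<Rightarrow> 'x \<Rightarrow> 'x \<Rightarrow> 'x)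
     \<Rightarrow> ('a set \<Rightarrow> ('a \<Rightarrow> 'x) \<Rightarrow> 'x) \<Rightarrow> ('x \<Rightarrow> 'a) \<Rightarrow> bool" where
  "BJ_hom C bop pop h \<longleftrightarrow> h \<in> extensional C \<and>
     (\<forall>b\<in>compl_opens. \<forall>x\<in>C. \<forall>y\<in>C. h (bop b x y) = OL_bop b (h x) (h y)) \<and>
     (\<forall>P\<in>partitions. \<forall>xs\<in>P \<rightarrow>\<^sub>E C. h (pop P xs) = OL_pop P (\<lambda>b. h (xs b)))"

text \<open>The frame of the etale space E(F): homomorphisms ordered pointwise.\<close>
definition etale_frame :: "'x set \<Rightarrow> ('a::complete_lattice \<Rightarrow> 'x \<Rightarrow> 'x \<Rightarrow> 'x)
     \<Rightarrow> ('a set \<Rightarrow> ('a \<Rightarrow> 'x) \<Rightarrow> 'x) \<Rightarrow> ('x \<Rightarrow> 'a) set" where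
  "etale_frame C bop pop = {h. BJ_hom C bop pop h}"

definition pointwise_le :: "'x set \<Rightarrow> ('x \<Rightarrow> 'a::complete_lattice) \<Rightarrow> ('x \<Rightarrow> 'a) \<Rightarrow> bool" where
  "pointwise_le C h k \<longleftrightarrow> (\<forall>x\<in>C. h x \<le> k x)"

definition is_lub_in :: "'c set \<Rightarrow> ('c \<Rightarrow> 'c \<Rightarrow> bool) \<Rightarrow> 'c set \<Rightarrow> 'c \<Rightarrow> bool" where
  "is_lub_in X le S s \<longleftrightarrow> s \<in> X \<and> (\<forall>y\<in>S. le y s) \<and> (\<forall>z\<in>X. (\<forall>y\<in>S. le y z) \<longrightarrow> le s z)"

definition is_glb_in :: "'c set \<Rightarrow> ('c \<Rightarrow> 'c \<Rightarrow> bool) \<Rightarrow> 'c set \<Rightarrow> 'c \<Rightarrow> bool" where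
  "is_glb_in X le S s \<longleftrightarrow> s \<in> X \<and> (\<forall>y\<in>S. le s y) \<and> (\<forall>z\<in>X. (\<forall>y\<in>S. le z y) \<longrightarrow> le z s)"

text \<open>A point, i.e. a frame map into {bot,top}, represented by the set of elements
  sent to top: it preserves the top, binary meets and arbitrary joins.\<close>
definition frame_point :: "'c set \<Rightarrow> ('c \<Rightarrow> 'c \<Rightarrow> bool) \<Rightarrow> 'c set \<Rightarrow> bool" where
  "frame_point X le p \<longleftrightarrow> p \<subseteq> X \<and>
     (\<forall>t. is_glb_in X le {} t \<longrightarrow> t \<in> p) \<and>
     (\<forall>a\<in>X. \<forall>b\<in>X. \<forall>m. is_glb_in X le {a, b} m \<longrightarrow> (m \<in> p \<longleftrightarrow> a \<in> p \<and> b \<in> p)) \<and>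
     (\<forall>S s. S \<subseteq> X \<longrightarrow> is_lub_in X le S s \<longrightarrow> (s \<in> p \<longleftrightarrow> (\<exists>y\<in>S. y \<in> p)))"

definition locale_points :: "'a::complete_lattice set set" where
  "locale_points = {p. frame_point UNIV (\<le>) p}"

definition point_space :: "'c set \<Rightarrow> ('c \<Rightarrow> 'c \<Rightarrow> bool) \<Rightarrow> 'c set topology" where
  "point_space X le = subtopology (topology_generated_by
     {{p. frame_point X le p \<and> u \<in> p} | u. u \<in> X}) {p. frame_point X le p}"

definition etale_points :: "'x set \<Rightarrow> ('a::complete_lattice \<Rightarrow> 'x \<Rightarrow> 'x \<Rightarrow> 'x)
     \<Rightarrow> ('a set \<Rightarrow> ('a \<Rightarrow> 'x) \<Rightarrow> 'x) \<Rightarrow> ('x \<Rightarrow> 'a) set topology" where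
  "etale_points C bop pop = point_space (etale_frame C bop pop) (pointwise_le C)"

definition equiv_b :: "('a \<Rightarrow> 'x \<Rightarrow> 'x \<Rightarrow> 'x) \<Rightarrow> 'a \<Rightarrow> 'x \<Rightarrow> 'x \<Rightarrow> bool" where
  "equiv_b bop b x y \<longleftrightarrow> bop b x y = y"

definition equiv_p :: "('a::complete_lattice \<Rightarrow> 'x \<Rightarrow> 'x \<Rightarrow> 'x) \<Rightarrow> 'a set \<Rightarrow> 'x \<Rightarrow> 'x \<Rightarrow> bool" where
  "equiv_p bop p x y \<longleftrightarrow> (\<exists>b\<in>compl_opens. b \<in> p \<and> equiv_b bop b x y)"

definition stalk_class :: "'x set \<Rightarrow> ('a::complete_lattice \<Rightarrow> 'x \<Rightarrow> 'x \<Rightarrow> 'x) \<Rightarrow> 'a set \<Rightarrow> 'x \<Rightarrow> 'x set" where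
  "stalk_class C bop p x = {y\<in>C. equiv_p bop p x y}"

text \<open>Subbasic open [x | b] = {[x]_p : p \<in> b}, elements of the sum being pairs (p, [x]_p).\<close>
definition subbasic :: "'x set \<Rightarrow> ('a::complete_lattice \<Rightarrow> 'x \<Rightarrow> 'x \<Rightarrow> 'x) \<Rightarrow> 'x \<Rightarrow> 'a \<Rightarrow> ('a set \<times> 'x set) set" where
  "subbasic C bop x b = {(p, stalk_class C bop p x) | p. p \<in> locale_points \<and> b \<in> p}"

definition stalk_sum :: "'x set \<Rightarrow> ('a::complete_lattice \<Rightarrow> 'x \<Rightarrow> 'x \<Rightarrow> 'x) \<Rightarrow> ('a set \<times> 'x set) set" where
  "stalk_sum C bop = {(p, stalk_class C bop p x) | p x. p \<in> locale_points \<and> x \<in> C}"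

definition stalk_sum_space :: "'x set \<Rightarrow> ('a::complete_lattice \<Rightarrow> 'x \<Rightarrow> 'x \<Rightarrow> 'x) \<Rightarrow> ('a set \<times> 'x set) topology" where
  "stalk_sum_space C bop = subtopology
     (topology_generated_by {subbasic C bop x b | x b. x \<in> C \<and> b \<in> compl_opens})
     (stalk_sum C bop)"

end

theory Submission
  imports Defs
begin

locale bjctx =
  fixes C :: "'x set"
    and bop :: "'a::complete_lattice \<Rightarrow> 'x \<Rightarrow> 'x \<Rightarrow> 'x"
    and pop :: "'a set \<Rightarrow> ('a \<Rightarrow> 'x) \<Rightarrow> 'x"
  assumes FL: "frame_law TYPE('a)"
    and UP: "ultraparacompact TYPE('a)"
    and BJ: "BJ_set C bop pop"
begin

abbreviation "B \<equiv> (compl_opens :: 'a set)"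

lemma fl: "inf a (Sup S) = Sup ((\<lambda>s. inf a s) ` S)" for a :: 'a
  using FL unfolding frame_law_def by blast

lemma distr: "inf a (sup x y) = sup (inf a x) (inf a y)" for a :: 'a
  using fl[of a "{x,y}"] by simp

lemma distr': "inf (sup x y) a = sup (inf x a) (inf y a)" for a :: 'a
  using distr[of a x y] by (simp add: inf_commute)

lemma compl_unique:
  fixes b c c' :: 'a
  assumes "inf b c = bot" "sup b c = top" "inf b c' = bot" "sup b c' = top"
  shows "c = c'"
proof -
  have "c = inf c (sup b c')" using assms by simp
  also have "\<dots> = sup (inf c b) (inf c c')" by (rule distr)
  also have "\<dots> = inf c c'" using assms by (simp add: inf_commute)
  finally have 1: "c = inf c c'" .
  have "c' = inf c' (sup b c)" using assms by simp
  also have "\<dots> = sup (inf c' b) (inf c' c)" by (rule distr)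
  also have "\<dots> = inf c' c" using assms by (simp add: inf_commute)
  finally have "c' = inf c' c" .
  with 1 show ?thesis by (simp add: inf_commute)
qed

lemma lcompl: assumes "b \<in> B" shows "inf b (lcompl b) = bot" "sup b (lcompl b) = top"
proof -
  obtain c where c: "inf b c = bot" "sup b c = top" using assms unfolding compl_opens_def complemented_def by blast
  have "lcompl b = c" unfolding lcompl_def
  proof (rule the_equality)
    show "inf b c = bot \<and> sup b c = top" using c by simp
    fix c' assume "inf b c' = bot \<and> sup b c' = top"
    then show "c' = c" using compl_unique[of b c' c] c by simp
  qed
  with c show "inf b (lcompl b) = bot" "sup b (lcompl b) = top" by auto
qed

lemma lcompl_B: "b \<in> B \<Longrightarrow> lcompl b \<in> B"
proof -
  assume b: "b \<in> B"
  have "inf (lcompl b) b = bot" "sup (lcompl b) b = top"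
    using lcompl[OF b] by (simp_all only: inf_commute sup_commute)
  then show ?thesis unfolding compl_opens_def complemented_def by blast
qed

lemma top_B: "top \<in> B"
  unfolding compl_opens_def complemented_def by (intro CollectI exI[of _ bot]) simp

lemma distr2: "sup a (inf x y) = inf (sup a x) (sup a y)" for a :: 'a
proof -
  have "inf (sup a x) (sup a y) = sup (inf (sup a x) a) (inf (sup a x) y)" by (rule distr)
  also have "\<dots> = sup a (sup (inf x a) (sup (inf a y) (inf x y)))"
    by (simp add: distr' sup_assoc)
  also have "\<dots> = sup (sup a (inf x a)) (sup (inf a y) (inf x y))"
    by (simp add: sup_assoc)
  also have "\<dots> = sup a (sup (inf a y) (inf x y))"
    by (simp add: sup.absorb1)
  also have "\<dots> = sup (sup a (inf a y)) (inf x y)"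
    by (simp only: sup_assoc)
  also have "\<dots> = sup a (inf x y)"
    by (simp only: sup.absorb1 inf_le1)
  finally show ?thesis by simp
qed

lemma inf_B: assumes "b \<in> B" "c \<in> B" shows "inf b c \<in> B"
proof -
  let ?d = "sup (lcompl b) (lcompl c)"
  have "inf (inf b c) ?d = sup (inf (inf b c) (lcompl b)) (inf (inf b c) (lcompl c))" by (rule distr)
  also have "\<dots> = bot"
  proof -
    have "inf (inf b c) (lcompl b) = inf c (inf b (lcompl b))" by (simp only: inf_assoc inf_commute inf_left_commute)
    moreover have "inf (inf b c) (lcompl c) = inf b (inf c (lcompl c))" by (simp only: inf_assoc inf_commute inf_left_commute)
    ultimately show ?thesis using lcompl(1)[OF assms(1)] lcompl(1)[OF assms(2)] by simp
  qed
  finally have 1: "inf (inf b c) ?d = bot" .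
  have "sup (inf b c) ?d = inf (sup ?d b) (sup ?d c)" using distr2[of ?d b c] by (simp add: sup_commute)
  also have "\<dots> = top"
  proof -
    have "sup b (lcompl b) \<le> sup ?d b" by (simp add: le_supI1 le_supI2)
    then have 1: "sup ?d b = top" using lcompl(2)[OF assms(1)] by (simp add: top_le)
    have "sup c (lcompl c) \<le> sup ?d c" by (simp add: le_supI1 le_supI2)
    then have 2: "sup ?d c = top" using lcompl(2)[OF assms(2)] by (simp add: top_le)
    show ?thesis using 1 2 by simp
  qed
  finally show ?thesis using 1 unfolding compl_opens_def complemented_def by blast
qed

lemma part_B: assumes "P \<in> partitions" "c \<in> P" shows "c \<in> B"
proof -
  have P: "\<And>u v. u \<in> P \<Longrightarrow> v \<in> P \<Longrightarrow> u \<noteq> v \<Longrightarrow> inf u v = bot" "Sup P = top"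
    using assms(1) unfolding partitions_def is_partition_def by auto
  have "inf c (Sup (P - {c})) = Sup ((\<lambda>s. inf c s) ` (P - {c}))" by (rule fl)
  also have "\<dots> = bot"
  proof -
    have "\<forall>s\<in>P - {c}. inf c s = bot" using P(1) assms(2) by blast
    then show ?thesis by (simp add: SUP_bot_conv)
  qed
  finally have 1: "inf c (Sup (P - {c})) = bot" .
  have "sup c (Sup (P - {c})) = Sup (insert c (P - {c}))" by (simp only: complete_lattice_class.Sup_insert)
  also have "insert c (P - {c}) = P" using assms(2) by blast
  finally have "sup c (Sup (P - {c})) = Sup P" .
  then show ?thesis using 1 P(2) unfolding compl_opens_def complemented_def by auto
qed

lemma split_c: assumes "c \<in> B" shows "a = sup (inf a c) (inf a (lcompl c))"
proof -
  have "a = inf a (sup c (lcompl c))" using lcompl(2)[OF assms] by simp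
  also have "\<dots> = sup (inf a c) (inf a (lcompl c))" by (rule distr)
  finally show ?thesis .
qed


lemma BJ_conj: "(\<forall>b\<in>B. \<forall>x\<in>C. \<forall>y\<in>C. bop b x y \<in> C) \<and>
     (\<forall>P\<in>partitions. \<forall>xs\<in>P \<rightarrow>\<^sub>E C. pop P xs \<in> C) \<and>
     (\<forall>b\<in>B. \<forall>x\<in>C. bop b x x = x) \<and>
     (\<forall>b\<in>B. \<forall>x\<in>C. \<forall>y\<in>C. \<forall>z\<in>C. bop b (bop b x y) z = bop b x z) \<and>
     (\<forall>b\<in>B. \<forall>x\<in>C. \<forall>y\<in>C. \<forall>z\<in>C. bop b x (bop b y z) = bop b x z) \<and>
     (\<forall>x\<in>C. \<forall>y\<in>C. bop top x y = x) \<and>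
     (\<forall>b\<in>B. \<forall>x\<in>C. \<forall>y\<in>C. bop (lcompl b) x y = bop b y x) \<and>
     (\<forall>b\<in>B. \<forall>c\<in>B. \<forall>x\<in>C. \<forall>y\<in>C.
         bop (inf b c) x y = bop b (bop c x y) y) \<and>
     (\<forall>P\<in>partitions. \<forall>z\<in>C. pop P (\<lambda>b\<in>P. z) = z) \<and>
     (\<forall>P\<in>partitions. \<forall>xs\<in>P \<rightarrow>\<^sub>E C. \<forall>ys\<in>P \<rightarrow>\<^sub>E C.
         pop P (\<lambda>b\<in>P. bop b (xs b) (ys b)) = pop P xs) \<and>
     (\<forall>P\<in>partitions. \<forall>xs\<in>P \<rightarrow>\<^sub>E C. \<forall>b\<in>P. bop b (pop P xs) (xs b) = xs b)"
  using BJ unfolding BJ_set_def .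

lemma ax_bop_closed: "b \<in> B \<Longrightarrow> x \<in> C \<Longrightarrow> y \<in> C \<Longrightarrow> bop b x y \<in> C"
  using BJ_conj[THEN conjunct1] by blast

lemma ax_pop_closed: "P \<in> partitions \<Longrightarrow> xs \<in> P \<rightarrow>\<^sub>E C \<Longrightarrow> pop P xs \<in> C"
  using BJ_conj[THEN conjunct2, THEN conjunct1] by blast

lemma A1: "b \<in> B \<Longrightarrow> x \<in> C \<Longrightarrow> bop b x x = x"
  using BJ_conj[THEN conjunct2, THEN conjunct2, THEN conjunct1] by blast

lemma A2: "b \<in> B \<Longrightarrow> x \<in> C \<Longrightarrow> y \<in> C \<Longrightarrow> z \<in> C \<Longrightarrow> bop b (bop b x y) z = bop b x z"
  using BJ_conj[THEN conjunct2, THEN conjunct2, THEN conjunct2, THEN conjunct1] by blast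

lemma A3: "b \<in> B \<Longrightarrow> x \<in> C \<Longrightarrow> y \<in> C \<Longrightarrow> z \<in> C \<Longrightarrow> bop b x (bop b y z) = bop b x z"
  using BJ_conj[THEN conjunct2, THEN conjunct2, THEN conjunct2, THEN conjunct2, THEN conjunct1] by blast

lemma A4: "x \<in> C \<Longrightarrow> y \<in> C \<Longrightarrow> bop top x y = x"
  using BJ_conj[THEN conjunct2, THEN conjunct2, THEN conjunct2, THEN conjunct2, THEN conjunct2, THEN conjunct1] by blast

lemma A5: "b \<in> B \<Longrightarrow> x \<in> C \<Longrightarrow> y \<in> C \<Longrightarrow> bop (lcompl b) x y = bop b y x"
  using BJ_conj[THEN conjunct2, THEN conjunct2, THEN conjunct2, THEN conjunct2, THEN conjunct2, THEN conjunct2, THEN conjunct1] by blast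

lemma A6: "b \<in> B \<Longrightarrow> c \<in> B \<Longrightarrow> x \<in> C \<Longrightarrow> y \<in> C \<Longrightarrow> bop (inf b c) x y = bop b (bop c x y) y"
  using BJ_conj[THEN conjunct2, THEN conjunct2, THEN conjunct2, THEN conjunct2, THEN conjunct2, THEN conjunct2, THEN conjunct2, THEN conjunct1] by blast

lemma P1: "P \<in> partitions \<Longrightarrow> z \<in> C \<Longrightarrow> pop P (\<lambda>b\<in>P. z) = z"
  using BJ_conj[THEN conjunct2, THEN conjunct2, THEN conjunct2, THEN conjunct2, THEN conjunct2, THEN conjunct2, THEN conjunct2, THEN conjunct2, THEN conjunct1] by blast

lemma P2: "P \<in> partitions \<Longrightarrow> xs \<in> P \<rightarrow>\<^sub>E C \<Longrightarrow> ys \<in> P \<rightarrow>\<^sub>E C \<Longrightarrow> pop P (\<lambda>b\<in>P. bop b (xs b) (ys b)) = pop P xs"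
  using BJ_conj[THEN conjunct2, THEN conjunct2, THEN conjunct2, THEN conjunct2, THEN conjunct2, THEN conjunct2, THEN conjunct2, THEN conjunct2, THEN conjunct2, THEN conjunct1] by blast

lemma P3: "P \<in> partitions \<Longrightarrow> xs \<in> P \<rightarrow>\<^sub>E C \<Longrightarrow> b \<in> P \<Longrightarrow> bop b (pop P xs) (xs b) = xs b"
  using BJ_conj[THEN conjunct2, THEN conjunct2, THEN conjunct2, THEN conjunct2, THEN conjunct2, THEN conjunct2, THEN conjunct2, THEN conjunct2, THEN conjunct2, THEN conjunct2] by blast

lemma eq_sym: "b \<in> B \<Longrightarrow> x \<in> C \<Longrightarrow> y \<in> C \<Longrightarrow> bop b x y = y \<Longrightarrow> bop b y x = x"
  using A2[of b x y x] A1[of b x] by simp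

lemma eq_mono: assumes "b \<in> B" "b' \<in> B" "b' \<le> b" "x \<in> C" "y \<in> C" "bop b x y = y"
  shows "bop b' x y = y"
proof -
  have "bop b' x y = bop (inf b' b) x y" using assms(3) by (simp add: inf_absorb1)
  also have "\<dots> = bop b' (bop b x y) y" using A6 assms by blast
  also have "\<dots> = y" using assms A1 by simp
  finally show ?thesis .
qed

lemma eq_trans: assumes "b \<in> B" "x \<in> C" "y \<in> C" "z \<in> C" "bop b x y = y" "bop b y z = z"
  shows "bop b x z = z"
proof -
  have "bop b y z = bop b x z" using A2[of b x y z] assms by simp
  then show ?thesis using assms by simp
qed

lemma eq_bop1: "c \<in> B \<Longrightarrow> y \<in> C \<Longrightarrow> z \<in> C \<Longrightarrow> bop c y (bop c y z) = bop c y z"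
  using A3[of c y y z] A1[of c y] by simp

lemma eq_bop2: "c \<in> B \<Longrightarrow> y \<in> C \<Longrightarrow> z \<in> C \<Longrightarrow> bop (lcompl c) z (bop c y z) = bop c y z"
  using A5[of c z "bop c y z"] A2[of c y z z] A1[of c z] ax_bop_closed[of c y z] by simp

lemma eq_pop: "P \<in> partitions \<Longrightarrow> xs \<in> P \<rightarrow>\<^sub>E C \<Longrightarrow> c \<in> P \<Longrightarrow> bop c (pop P xs) (xs c) = xs c"
  by (rule P3)

definition SS :: "'x \<Rightarrow> 'x \<Rightarrow> 'a set" where
  "SS x y = {b \<in> B. bop b x y = y}"

definition hx :: "'x \<Rightarrow> 'x \<Rightarrow> 'a" where
  "hx x = restrict (\<lambda>y. Sup (SS x y)) C"

lemma hx_app: "y \<in> C \<Longrightarrow> hx x y = Sup (SS x y)"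
  unfolding hx_def by simp

lemma SS_sym: "x \<in> C \<Longrightarrow> y \<in> C \<Longrightarrow> SS x y = SS y x"
  unfolding SS_def using eq_sym by blast

lemma hx_sym: "x \<in> C \<Longrightarrow> y \<in> C \<Longrightarrow> hx x y = hx y x"
  using SS_sym hx_app by simp

lemma hx_self: "x \<in> C \<Longrightarrow> hx x x = top"
  using hx_app[of x x] top_B A1[OF top_B] unfolding SS_def by (simp add: Sup_upper top_le)

lemma SS_le: "b \<in> B \<Longrightarrow> y \<in> C \<Longrightarrow> bop b x y = y \<Longrightarrow> b \<le> hx x y"
  using hx_app[of y x] unfolding SS_def by (auto intro: Sup_upper)


lemma SS_mem: "b \<in> B \<Longrightarrow> bop b x y = y \<Longrightarrow> b \<in> SS x y"
  unfolding SS_def by simp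

lemma hx_bop: assumes x: "x \<in> C" and c: "c \<in> B" and y: "y \<in> C" and z: "z \<in> C"
  shows "hx x (bop c y z) = OL_bop c (hx x y) (hx x z)"
proof -
  define w where "w = bop c y z"
  have w: "w \<in> C" unfolding w_def using ax_bop_closed c y z by blast
  have lc: "lcompl c \<in> B" using lcompl_B c by blast
  have yw: "bop c y w = w" unfolding w_def using eq_bop1 c y z by blast
  have zw: "bop (lcompl c) z w = w" unfolding w_def using eq_bop2 c y z by blast
  have "Sup (SS x w) = sup (inf c (Sup (SS x y))) (inf (lcompl c) (Sup (SS x z)))"
  proof (rule antisym)
    show "Sup (SS x w) \<le> sup (inf c (Sup (SS x y))) (inf (lcompl c) (Sup (SS x z)))"
    proof (rule Sup_least)
      fix b assume "b \<in> SS x w"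
      then have b: "b \<in> B" and xw: "bop b x w = w" unfolding SS_def by auto
      have bc: "inf b c \<in> B" using inf_B b c by blast
      have blc: "inf b (lcompl c) \<in> B" using inf_B b lc by blast
      have 1: "inf b c \<le> inf c (Sup (SS x y))"
      proof -
        have "bop (inf b c) x w = w" using eq_mono[OF b bc _ x w xw] by simp
        moreover have "bop (inf b c) w y = y"
          using eq_sym[OF bc y w] eq_mono[OF c bc _ y w yw] by simp
        ultimately have "bop (inf b c) x y = y" using eq_trans[OF bc x w y] by blast
        then have "inf b c \<in> SS x y" using SS_mem bc by blast
        then show ?thesis by (simp add: Sup_upper)
      qed
      have 2: "inf b (lcompl c) \<le> inf (lcompl c) (Sup (SS x z))"
      proof -
        have "bop (inf b (lcompl c)) x w = w" using eq_mono[OF b blc _ x w xw] by simp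
        moreover have "bop (inf b (lcompl c)) w z = z"
          using eq_sym[OF blc z w] eq_mono[OF lc blc _ z w zw] by simp
        ultimately have "bop (inf b (lcompl c)) x z = z" using eq_trans[OF blc x w z] by blast
        then have "inf b (lcompl c) \<in> SS x z" using SS_mem blc by blast
        then show ?thesis by (simp add: Sup_upper)
      qed
      have "b = sup (inf b c) (inf b (lcompl c))" by (rule split_c[OF c])
      also have "\<dots> \<le> sup (inf c (Sup (SS x y))) (inf (lcompl c) (Sup (SS x z)))"
        using 1 2 by (rule sup_mono)
      finally show "b \<le> sup (inf c (Sup (SS x y))) (inf (lcompl c) (Sup (SS x z)))" .
    qed
  next
    have 1: "inf c (Sup (SS x y)) \<le> Sup (SS x w)"
    proof -
      have "inf c (Sup (SS x y)) = Sup ((\<lambda>s. inf c s) ` SS x y)" by (rule fl)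
      also have "\<dots> \<le> Sup (SS x w)"
      proof (rule SUP_least)
        fix b assume "b \<in> SS x y"
        then have b: "b \<in> B" and xy: "bop b x y = y" unfolding SS_def by auto
        have cb: "inf c b \<in> B" using inf_B b c by blast
        have "bop (inf c b) x y = y" using eq_mono[OF b cb _ x y xy] by simp
        moreover have "bop (inf c b) y w = w" using eq_mono[OF c cb _ y w yw] by simp
        ultimately have "bop (inf c b) x w = w" using eq_trans[OF cb x y w] by blast
        then have "inf c b \<in> SS x w" using SS_mem cb by blast
        then show "inf c b \<le> Sup (SS x w)" by (simp add: Sup_upper)
      qed
      finally show ?thesis .
    qed
    have 2: "inf (lcompl c) (Sup (SS x z)) \<le> Sup (SS x w)"
    proof -
      have "inf (lcompl c) (Sup (SS x z)) = Sup ((\<lambda>s. inf (lcompl c) s) ` SS x z)" by (rule fl)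
      also have "\<dots> \<le> Sup (SS x w)"
      proof (rule SUP_least)
        fix b assume "b \<in> SS x z"
        then have b: "b \<in> B" and xz: "bop b x z = z" unfolding SS_def by auto
        have cb: "inf (lcompl c) b \<in> B" using inf_B b lc by blast
        have "bop (inf (lcompl c) b) x z = z" using eq_mono[OF b cb _ x z xz] by simp
        moreover have "bop (inf (lcompl c) b) z w = w" using eq_mono[OF lc cb _ z w zw] by simp
        ultimately have "bop (inf (lcompl c) b) x w = w" using eq_trans[OF cb x z w] by blast
        then have "inf (lcompl c) b \<in> SS x w" using SS_mem cb by blast
        then show "inf (lcompl c) b \<le> Sup (SS x w)" by (simp add: Sup_upper)
      qed
      finally show ?thesis .
    qed
    show "sup (inf c (Sup (SS x y))) (inf (lcompl c) (Sup (SS x z))) \<le> Sup (SS x w)"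
      using 1 2 by (rule sup_least)
  qed
  then show ?thesis unfolding OL_bop_def w_def[symmetric] using hx_app w y z by simp
qed

lemma hx_pop: assumes x: "x \<in> C" and P: "P \<in> partitions" and ys: "ys \<in> P \<rightarrow>\<^sub>E C"
  shows "hx x (pop P ys) = OL_pop P (\<lambda>b. hx x (ys b))"
proof -
  define Y where "Y = pop P ys"
  have Y: "Y \<in> C" unfolding Y_def using ax_pop_closed P ys by blast
  have ysC: "\<And>c. c \<in> P \<Longrightarrow> ys c \<in> C" using ys by auto
  have cB: "\<And>c. c \<in> P \<Longrightarrow> c \<in> B" using part_B P by blast
  have Yc: "\<And>c. c \<in> P \<Longrightarrow> bop c Y (ys c) = ys c" unfolding Y_def using P3 P ys by blast
  have SupP: "Sup P = top" using P unfolding partitions_def is_partition_def by auto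
  have "Sup (SS x Y) = Sup ((\<lambda>c. inf c (Sup (SS x (ys c)))) ` P)"
  proof (rule antisym)
    show "Sup (SS x Y) \<le> Sup ((\<lambda>c. inf c (Sup (SS x (ys c)))) ` P)"
    proof (rule Sup_least)
      fix b assume "b \<in> SS x Y"
      then have b: "b \<in> B" and xY: "bop b x Y = Y" unfolding SS_def by auto
      have "b = inf b (Sup P)" using SupP by simp
      also have "\<dots> = Sup ((\<lambda>c. inf b c) ` P)" by (rule fl)
      also have "\<dots> \<le> Sup ((\<lambda>c. inf c (Sup (SS x (ys c)))) ` P)"
      proof (rule SUP_mono)
        fix c assume c: "c \<in> P"
        have bc: "inf b c \<in> B" using inf_B b cB c by blast
        have "bop (inf b c) x Y = Y" using eq_mono[OF b bc _ x Y xY] by simp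
        moreover have "bop (inf b c) Y (ys c) = ys c" using eq_mono[OF cB[OF c] bc _ Y ysC[OF c] Yc[OF c]] by simp
        ultimately have "bop (inf b c) x (ys c) = ys c" using eq_trans[OF bc x Y ysC[OF c]] by blast
        then have "inf b c \<in> SS x (ys c)" using SS_mem bc by blast
        then have "inf b c \<le> inf c (Sup (SS x (ys c)))" by (simp add: Sup_upper le_infI2)
        then show "\<exists>m\<in>P. inf b c \<le> inf m (Sup (SS x (ys m)))" using c by blast
      qed
      finally show "b \<le> Sup ((\<lambda>c. inf c (Sup (SS x (ys c)))) ` P)" .
    qed
  next
    show "Sup ((\<lambda>c. inf c (Sup (SS x (ys c)))) ` P) \<le> Sup (SS x Y)"
    proof (rule SUP_least)
      fix c assume c: "c \<in> P"
      have "inf c (Sup (SS x (ys c))) = Sup ((\<lambda>s. inf c s) ` SS x (ys c))" by (rule fl)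
      also have "\<dots> \<le> Sup (SS x Y)"
      proof (rule SUP_least)
        fix b assume "b \<in> SS x (ys c)"
        then have b: "b \<in> B" and xy: "bop b x (ys c) = ys c" unfolding SS_def by auto
        have cb: "inf c b \<in> B" using inf_B b cB c by blast
        have "bop (inf c b) x (ys c) = ys c" using eq_mono[OF b cb _ x ysC[OF c] xy] by simp
        moreover have "bop (inf c b) (ys c) Y = Y"
          using eq_sym[OF cb Y ysC[OF c]] eq_mono[OF cB[OF c] cb _ Y ysC[OF c] Yc[OF c]] by simp
        ultimately have "bop (inf c b) x Y = Y" using eq_trans[OF cb x ysC[OF c] Y] by blast
        then have "inf c b \<in> SS x Y" using SS_mem cb by blast
        then show "inf c b \<le> Sup (SS x Y)" by (simp add: Sup_upper)
      qed
      finally show "inf c (Sup (SS x (ys c))) \<le> Sup (SS x Y)" .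
    qed
  qed
  moreover have "(\<lambda>c. inf c (Sup (SS x (ys c)))) ` P = (\<lambda>c. inf c (hx x (ys c))) ` P"
    using hx_app ysC by (auto intro!: image_cong)
  ultimately show ?thesis unfolding OL_pop_def Y_def[symmetric] using hx_app Y by simp
qed

lemma hx_hom: "x \<in> C \<Longrightarrow> BJ_hom C bop pop (hx x)"
  unfolding BJ_hom_def using hx_bop hx_pop by (simp add: hx_def)


abbreviation "EE \<equiv> etale_frame C bop pop"
abbreviation "LE \<equiv> pointwise_le C"

definition cst :: "'a \<Rightarrow> 'x \<Rightarrow> 'a" where "cst u = restrict (\<lambda>_. u) C"
definition pinf :: "('x \<Rightarrow> 'a) \<Rightarrow> ('x \<Rightarrow> 'a) \<Rightarrow> 'x \<Rightarrow> 'a" where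
  "pinf h k = restrict (\<lambda>y. inf (h y) (k y)) C"
definition psup :: "('x \<Rightarrow> 'a) set \<Rightarrow> 'x \<Rightarrow> 'a" where
  "psup H = restrict (\<lambda>y. Sup ((\<lambda>h. h y) ` H)) C"

lemma inE: "h \<in> EE \<longleftrightarrow> BJ_hom C bop pop h"
  unfolding etale_frame_def by simp

lemma homD:
  assumes "h \<in> EE"
  shows "b \<in> B \<Longrightarrow> x \<in> C \<Longrightarrow> y \<in> C \<Longrightarrow> h (bop b x y) = OL_bop b (h x) (h y)"
    and "P \<in> partitions \<Longrightarrow> xs \<in> P \<rightarrow>\<^sub>E C \<Longrightarrow> h (pop P xs) = OL_pop P (\<lambda>b. h (xs b))"
  using assms unfolding inE BJ_hom_def by blast+

lemma hx_E: "x \<in> C \<Longrightarrow> hx x \<in> EE"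
  using hx_hom inE by blast

lemma fl': "inf (Sup S) a = Sup ((\<lambda>s. inf s a) ` S)" for a :: 'a
  using fl[of a S] by (simp add: inf_commute)

lemma cst_E: "cst u \<in> EE"
  unfolding inE BJ_hom_def
proof (intro conjI ballI)
  show "cst u \<in> extensional C" unfolding cst_def by simp
next
  fix b x y assume b: "b \<in> B" and x: "x \<in> C" and y: "y \<in> C"
  have "OL_bop b u u = u" unfolding OL_bop_def using split_c[OF b, of u] by (simp add: inf_commute)
  then show "cst u (bop b x y) = OL_bop b (cst u x) (cst u y)"
    unfolding cst_def using ax_bop_closed[OF b x y] x y by simp
next
  fix P :: "'a set" and xs assume P: "P \<in> partitions" and xs: "xs \<in> P \<rightarrow>\<^sub>E C"
  have SupP: "Sup P = top" using P unfolding partitions_def is_partition_def by auto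
  have "OL_pop P (\<lambda>b. u) = u" unfolding OL_pop_def using fl'[of P u] SupP by simp
  moreover have "(\<lambda>b. inf b (cst u (xs b))) ` P = (\<lambda>b. inf b u) ` P"
    using xs unfolding cst_def by (auto intro!: image_cong)
  ultimately show "cst u (pop P xs) = OL_pop P (\<lambda>b. cst u (xs b))"
    using ax_pop_closed[OF P xs] unfolding OL_pop_def by (simp add: cst_def)
qed

lemma lat1:
  assumes c: "c \<in> B"
  shows "inf (sup (inf c a) (inf (lcompl c) b)) (sup (inf c a') (inf (lcompl c) b'))
       = sup (inf c (inf a a')) (inf (lcompl c) (inf b b'))"
proof -
  let ?d = "lcompl c"
  have cd: "inf c ?d = bot" using lcompl(1)[OF c] .
  have z1: "inf (inf c a) (inf ?d b') = bot"
  proof -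
    have "inf (inf c a) (inf ?d b') \<le> inf c ?d" by (meson inf_le1 inf_mono)
    then show ?thesis using cd by (simp add: bot_unique)
  qed
  have z2: "inf (inf ?d b) (inf c a') = bot"
  proof -
    have "inf (inf ?d b) (inf c a') \<le> inf ?d c" by (meson inf_le1 inf_mono)
    then show ?thesis using cd by (simp add: inf_commute bot_unique)
  qed
  have e1: "inf (inf c a) (inf c a') = inf c (inf a a')" by (simp add: inf_assoc inf_left_commute)
  have e2: "inf (inf ?d b) (inf ?d b') = inf ?d (inf b b')" by (simp add: inf_assoc inf_left_commute)
  have "inf (sup (inf c a) (inf ?d b)) (sup (inf c a') (inf ?d b'))
      = sup (inf (inf c a) (sup (inf c a') (inf ?d b'))) (inf (inf ?d b) (sup (inf c a') (inf ?d b')))"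
    by (rule distr')
  also have "\<dots> = sup (sup (inf (inf c a) (inf c a')) (inf (inf c a) (inf ?d b')))
                       (sup (inf (inf ?d b) (inf c a')) (inf (inf ?d b) (inf ?d b')))"
    by (simp only: distr)
  also have "\<dots> = sup (inf c (inf a a')) (inf ?d (inf b b'))"
    by (simp only: z1 z2 e1 e2 sup_bot_right sup_bot_left)
  finally show ?thesis .
qed

lemma lat2:
  fixes P :: "'a set"
  assumes P: "P \<in> partitions"
  shows "inf (Sup ((\<lambda>c. inf c (f c)) ` P)) (Sup ((\<lambda>c. inf c (g c)) ` P))
       = Sup ((\<lambda>c. inf c (inf (f c) (g c))) ` P)"
proof (rule antisym)
  have disj: "\<And>u v. u \<in> P \<Longrightarrow> v \<in> P \<Longrightarrow> u \<noteq> v \<Longrightarrow> inf u v = bot"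
    using P unfolding partitions_def is_partition_def by auto
  have "inf (Sup ((\<lambda>c. inf c (f c)) ` P)) (Sup ((\<lambda>c. inf c (g c)) ` P))
      = Sup ((\<lambda>s. inf s (Sup ((\<lambda>c. inf c (g c)) ` P))) ` (\<lambda>c. inf c (f c)) ` P)"
    by (rule fl'[of "(\<lambda>c. inf c (f c)) ` P" "Sup ((\<lambda>c. inf c (g c)) ` P)"])
  also have "\<dots> \<le> Sup ((\<lambda>c. inf c (inf (f c) (g c))) ` P)"
  proof (rule Sup_least)
    fix s assume "s \<in> (\<lambda>s. inf s (Sup ((\<lambda>c. inf c (g c)) ` P))) ` (\<lambda>c. inf c (f c)) ` P"
    then obtain c where c: "c \<in> P" and s: "s = inf (inf c (f c)) (Sup ((\<lambda>c. inf c (g c)) ` P))" by auto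
    have "s = Sup ((\<lambda>t. inf (inf c (f c)) t) ` (\<lambda>c. inf c (g c)) ` P)" unfolding s by (simp only: fl)
    also have "\<dots> \<le> Sup ((\<lambda>c. inf c (inf (f c) (g c))) ` P)"
    proof (rule Sup_least)
      fix t assume "t \<in> (\<lambda>t. inf (inf c (f c)) t) ` (\<lambda>c. inf c (g c)) ` P"
      then obtain d where d: "d \<in> P" and t: "t = inf (inf c (f c)) (inf d (g d))" by auto
      show "t \<le> Sup ((\<lambda>c. inf c (inf (f c) (g c))) ` P)"
      proof (cases "c = d")
        case True
        then have "t \<le> inf c (inf (f c) (g c))" unfolding t by (simp add: le_infI1 le_infI2)
        then show ?thesis using c by (meson SUP_upper2)
      next
        case False
        have "t \<le> inf c d" unfolding t by (meson inf_le1 inf_mono)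
        then have "t = bot" using disj[OF c d False] by (simp add: bot_unique)
        then show ?thesis by simp
      qed
    qed
    finally show "s \<le> Sup ((\<lambda>c. inf c (inf (f c) (g c))) ` P)" .
  qed
  finally show "inf (Sup ((\<lambda>c. inf c (f c)) ` P)) (Sup ((\<lambda>c. inf c (g c)) ` P))
      \<le> Sup ((\<lambda>c. inf c (inf (f c) (g c))) ` P)" .
next
  show "Sup ((\<lambda>c. inf c (inf (f c) (g c))) ` P)
      \<le> inf (Sup ((\<lambda>c. inf c (f c)) ` P)) (Sup ((\<lambda>c. inf c (g c)) ` P))"
  proof (rule SUP_least)
    fix c assume c: "c \<in> P"
    have 1: "inf c (inf (f c) (g c)) \<le> inf c (f c)" by (simp add: le_infI2)
    have 2: "inf c (inf (f c) (g c)) \<le> inf c (g c)" by (simp add: le_infI2)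
    show "inf c (inf (f c) (g c)) \<le> inf (Sup ((\<lambda>c. inf c (f c)) ` P)) (Sup ((\<lambda>c. inf c (g c)) ` P))"
      using 1 2 c by (meson SUP_upper2 le_inf_iff)
  qed
qed

lemma pinf_E: assumes h: "h \<in> EE" and k: "k \<in> EE" shows "pinf h k \<in> EE"
  unfolding inE BJ_hom_def
proof (intro conjI ballI)
  show "pinf h k \<in> extensional C" unfolding pinf_def by simp
next
  fix b x y assume b: "b \<in> B" and x: "x \<in> C" and y: "y \<in> C"
  show "pinf h k (bop b x y) = OL_bop b (pinf h k x) (pinf h k y)"
    unfolding pinf_def using ax_bop_closed[OF b x y] x y homD(1)[OF h b x y] homD(1)[OF k b x y]
    by (simp add: OL_bop_def lat1[OF b])
next
  fix P :: "'a set" and xs assume P: "P \<in> partitions" and xs: "xs \<in> P \<rightarrow>\<^sub>E C"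
  have "(\<lambda>c. inf c (pinf h k (xs c))) ` P = (\<lambda>c. inf c (inf (h (xs c)) (k (xs c)))) ` P"
    using xs unfolding pinf_def by (auto intro!: image_cong)
  then show "pinf h k (pop P xs) = OL_pop P (\<lambda>b. pinf h k (xs b))"
    unfolding OL_pop_def
    using ax_pop_closed[OF P xs] homD(2)[OF h P xs] homD(2)[OF k P xs] lat2[OF P]
    by (simp add: pinf_def OL_pop_def)
qed

lemma psup_E: assumes H: "H \<subseteq> EE" shows "psup H \<in> EE"
  unfolding inE BJ_hom_def
proof (intro conjI ballI)
  show "psup H \<in> extensional C" unfolding psup_def by simp
next
  fix b x y assume b: "b \<in> B" and x: "x \<in> C" and y: "y \<in> C"
  have "(\<lambda>h. h (bop b x y)) ` H = (\<lambda>h. sup (inf b (h x)) (inf (lcompl b) (h y))) ` H"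
    using homD(1)[OF _ b x y] H unfolding OL_bop_def by (auto intro!: image_cong)
  then have "Sup ((\<lambda>h. h (bop b x y)) ` H)
     = Sup ((\<lambda>h. sup (inf b (h x)) (inf (lcompl b) (h y))) ` H)" by simp
  also have "\<dots> = sup (Sup ((\<lambda>h. inf b (h x)) ` H)) (Sup ((\<lambda>h. inf (lcompl b) (h y)) ` H))"
    by (rule complete_lattice_class.SUP_sup_distrib[symmetric])
  also have "\<dots> = sup (inf b (Sup ((\<lambda>h. h x) ` H))) (inf (lcompl b) (Sup ((\<lambda>h. h y) ` H)))"
    by (simp add: fl image_image)
  finally show "psup H (bop b x y) = OL_bop b (psup H x) (psup H y)"
    unfolding psup_def OL_bop_def using ax_bop_closed[OF b x y] x y by simp
next
  fix P :: "'a set" and xs assume P: "P \<in> partitions" and xs: "xs \<in> P \<rightarrow>\<^sub>E C"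
  have xsC: "\<And>c. c \<in> P \<Longrightarrow> xs c \<in> C" using xs by auto
  have "(\<lambda>h. h (pop P xs)) ` H = (\<lambda>h. Sup ((\<lambda>c. inf c (h (xs c))) ` P)) ` H"
    using homD(2)[OF _ P xs] H unfolding OL_pop_def by (auto intro!: image_cong)
  then have "Sup ((\<lambda>h. h (pop P xs)) ` H) = (SUP h\<in>H. SUP c\<in>P. inf c (h (xs c)))" by simp
  also have "\<dots> = (SUP c\<in>P. SUP h\<in>H. inf c (h (xs c)))" by (rule SUP_commute)
  also have "\<dots> = (SUP c\<in>P. inf c (Sup ((\<lambda>h. h (xs c)) ` H)))"
    by (simp add: fl image_image)
  also have "\<dots> = (SUP c\<in>P. inf c (psup H (xs c)))"
    unfolding psup_def using xsC by (auto intro!: SUP_cong)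
  finally show "psup H (pop P xs) = OL_pop P (\<lambda>b. psup H (xs b))"
    unfolding OL_pop_def using ax_pop_closed[OF P xs] by (simp add: psup_def)
qed


lemma LE_iff: "LE h k \<longleftrightarrow> (\<forall>y\<in>C. h y \<le> k y)"
  unfolding pointwise_le_def by simp

lemma glb_empty_val: "is_glb_in EE LE {} t \<Longrightarrow> y \<in> C \<Longrightarrow> t y = top"
  unfolding is_glb_in_def LE_iff using cst_E[of top] by (auto simp: cst_def top_le)

lemma glb_two_val: assumes "is_glb_in EE LE {a, b} m" "a \<in> EE" "b \<in> EE" "y \<in> C"
  shows "m y = inf (a y) (b y)"
proof (rule antisym)
  show "m y \<le> inf (a y) (b y)" using assms unfolding is_glb_in_def LE_iff by auto
  have "LE (pinf a b) m" using assms pinf_E[of a b] unfolding is_glb_in_def LE_iff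
    by (auto simp: pinf_def)
  then show "inf (a y) (b y) \<le> m y" using assms(4) unfolding LE_iff pinf_def by auto
qed

lemma lub_val: assumes "is_lub_in EE LE S s" "S \<subseteq> EE" "y \<in> C"
  shows "s y = Sup ((\<lambda>h. h y) ` S)"
proof (rule antisym)
  have ub: "\<forall>h\<in>S. \<forall>y\<in>C. h y \<le> psup S y" by (auto simp: psup_def intro: SUP_upper)
  have "LE s (psup S)" using assms(1) psup_E[OF assms(2)] ub unfolding is_lub_in_def LE_iff
    by blast
  then show "s y \<le> Sup ((\<lambda>h. h y) ` S)" using assms(3) unfolding LE_iff psup_def by auto
  show "Sup ((\<lambda>h. h y) ` S) \<le> s y" using assms unfolding is_lub_in_def LE_iff
    by (auto intro: SUP_least)
qed

lemma glb_empty_cst: "is_glb_in EE LE {} (cst top)"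
  unfolding is_glb_in_def LE_iff using cst_E by (auto simp: cst_def)

lemma glb_two_pinf: "a \<in> EE \<Longrightarrow> b \<in> EE \<Longrightarrow> is_glb_in EE LE {a, b} (pinf a b)"
  unfolding is_glb_in_def LE_iff using pinf_E by (auto simp: pinf_def)

lemma lub_psup: "S \<subseteq> EE \<Longrightarrow> is_lub_in EE LE S (psup S)"
  unfolding is_lub_in_def LE_iff using psup_E by (auto simp: psup_def intro: SUP_upper SUP_least)

lemma lp_top: "p \<in> locale_points \<Longrightarrow> (top::'a) \<in> p"
  unfolding locale_points_def frame_point_def is_glb_in_def by auto

lemma lp_inf: "p \<in> locale_points \<Longrightarrow> inf a b \<in> p \<longleftrightarrow> a \<in> p \<and> b \<in> p" for a b :: 'a
proof -
  assume p: "p \<in> locale_points"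
  have "is_glb_in UNIV (\<le>) {a, b} (inf a b)" unfolding is_glb_in_def by auto
  then show ?thesis using p unfolding locale_points_def frame_point_def by blast
qed

lemma lp_Sup: "p \<in> locale_points \<Longrightarrow> Sup S \<in> p \<longleftrightarrow> (\<exists>y\<in>S. y \<in> p)" for S :: "'a set"
proof -
  assume p: "p \<in> locale_points"
  have "is_lub_in UNIV (\<le>) S (Sup S)" unfolding is_lub_in_def by (auto intro: Sup_upper Sup_least)
  then show ?thesis using p unfolding locale_points_def frame_point_def by blast
qed

lemma lp_mono: "p \<in> locale_points \<Longrightarrow> a \<le> b \<Longrightarrow> a \<in> p \<Longrightarrow> b \<in> p" for a b :: 'a
  using lp_inf[of p a b] by (simp add: inf_absorb1)

lemma lp_intro:
  fixes p :: "'a set"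
  assumes t: "top \<in> p" and i: "\<And>a b. inf a b \<in> p \<longleftrightarrow> a \<in> p \<and> b \<in> p"
    and s: "\<And>S. Sup S \<in> p \<longleftrightarrow> (\<exists>y\<in>S. y \<in> p)"
  shows "p \<in> locale_points"
  unfolding locale_points_def frame_point_def
proof (intro CollectI conjI allI ballI impI)
  fix tt :: 'a assume "is_glb_in UNIV (\<le>) {} tt"
  then have "tt = top" unfolding is_glb_in_def by (auto simp: top_le)
  then show "tt \<in> p" using t by simp
next
  fix a b m assume "is_glb_in UNIV (\<le>) {a, b} (m::'a)"
  then have "m = inf a b" unfolding is_glb_in_def by (auto intro: antisym)
  then show "(m \<in> p) = (a \<in> p \<and> b \<in> p)" using i by simp
next
  fix S ss assume "is_lub_in UNIV (\<le>) S (ss::'a)"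
  then have "ss = Sup S" unfolding is_lub_in_def by (auto intro: antisym Sup_least Sup_upper)
  then show "(ss \<in> p) = (\<exists>y\<in>S. y \<in> p)" using s by simp
qed simp

lemma fp_sub: "frame_point X le p \<Longrightarrow> p \<subseteq> X"
  unfolding frame_point_def by (elim conjE)

lemma fp_glb0: "frame_point X le p \<Longrightarrow> is_glb_in X le {} t \<Longrightarrow> t \<in> p"
proof -
  assume a: "frame_point X le p" and t: "is_glb_in X le {} t"
  have "\<forall>t. is_glb_in X le {} t \<longrightarrow> t \<in> p" using a unfolding frame_point_def by (elim conjE)
  then show ?thesis using t by (elim allE impE)
qed

lemma fp_glb2: "frame_point X le p \<Longrightarrow> a \<in> X \<Longrightarrow> b \<in> X \<Longrightarrow> is_glb_in X le {a, b} m \<Longrightarrow> (m \<in> p \<longleftrightarrow> a \<in> p \<and> b \<in> p)"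
proof -
  assume f: "frame_point X le p" and ab: "a \<in> X" "b \<in> X" and m: "is_glb_in X le {a, b} m"
  have "\<forall>a\<in>X. \<forall>b\<in>X. \<forall>m. is_glb_in X le {a, b} m \<longrightarrow> (m \<in> p \<longleftrightarrow> a \<in> p \<and> b \<in> p)"
    using f unfolding frame_point_def by (elim conjE)
  then show ?thesis using ab m by (elim ballE allE impE) auto
qed

lemma fp_lub: "frame_point X le p \<Longrightarrow> S \<subseteq> X \<Longrightarrow> is_lub_in X le S s \<Longrightarrow> (s \<in> p \<longleftrightarrow> (\<exists>y\<in>S. y \<in> p))"
proof -
  assume f: "frame_point X le p" and S: "S \<subseteq> X" and s: "is_lub_in X le S s"
  have "\<forall>S s. S \<subseteq> X \<longrightarrow> is_lub_in X le S s \<longrightarrow> (s \<in> p \<longleftrightarrow> (\<exists>y\<in>S. y \<in> p))"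
    using f unfolding frame_point_def by (elim conjE)
  then show ?thesis using S s by (elim allE impE) auto
qed

lemma eq_sub: "frame_point EE LE Q \<Longrightarrow> Q \<subseteq> EE"
  by (rule fp_sub)

lemma eq_top: "frame_point EE LE Q \<Longrightarrow> cst top \<in> Q"
  using fp_glb0[OF _ glb_empty_cst] .

lemma eq_inf: "frame_point EE LE Q \<Longrightarrow> a \<in> EE \<Longrightarrow> b \<in> EE \<Longrightarrow> pinf a b \<in> Q \<longleftrightarrow> a \<in> Q \<and> b \<in> Q"
  using fp_glb2[OF _ _ _ glb_two_pinf] .

lemma eq_Sup: "frame_point EE LE Q \<Longrightarrow> H \<subseteq> EE \<Longrightarrow> psup H \<in> Q \<longleftrightarrow> (\<exists>h\<in>H. h \<in> Q)"
  using fp_lub[OF _ _ lub_psup] .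

lemma Pp_point: assumes p: "p \<in> locale_points" and x: "x \<in> C"
  shows "frame_point EE LE {h \<in> EE. h x \<in> p}"
  unfolding frame_point_def
proof (intro conjI allI ballI impI)
  show "{h \<in> EE. h x \<in> p} \<subseteq> EE" by blast
next
  fix t assume t: "is_glb_in EE LE {} t"
  then have "t \<in> EE" unfolding is_glb_in_def by blast
  moreover have "t x = top" using glb_empty_val[OF t x] .
  ultimately show "t \<in> {h \<in> EE. h x \<in> p}" using lp_top[OF p] by simp
next
  fix a b m assume a: "a \<in> EE" and b: "b \<in> EE" and m: "is_glb_in EE LE {a, b} m"
  have "m \<in> EE" using m unfolding is_glb_in_def by blast
  then show "(m \<in> {h \<in> EE. h x \<in> p}) = (a \<in> {h \<in> EE. h x \<in> p} \<and> b \<in> {h \<in> EE. h x \<in> p})"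
    using glb_two_val[OF m a b x] lp_inf[OF p] a b by simp
next
  fix S s assume S: "S \<subseteq> EE" and s: "is_lub_in EE LE S s"
  have "s \<in> EE" using s unfolding is_lub_in_def by blast
  then show "(s \<in> {h \<in> EE. h x \<in> p}) = (\<exists>y\<in>S. y \<in> {h \<in> EE. h x \<in> p})"
    using lub_val[OF s S x] lp_Sup[OF p] S by auto
qed

definition pq :: "('x \<Rightarrow> 'a) set \<Rightarrow> 'a set" where "pq Q = {u. cst u \<in> Q}"

lemma pq_point: assumes Q: "frame_point EE LE Q" shows "pq Q \<in> locale_points"
proof (rule lp_intro)
  show "top \<in> pq Q" unfolding pq_def using eq_top[OF Q] by simp
next
  fix a b :: 'a
  have "cst (inf a b) = pinf (cst a) (cst b)" unfolding cst_def pinf_def by auto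
  then show "inf a b \<in> pq Q \<longleftrightarrow> a \<in> pq Q \<and> b \<in> pq Q"
    unfolding pq_def using eq_inf[OF Q cst_E cst_E] by simp
next
  fix S :: "'a set"
  have "cst (Sup S) = psup (cst ` S)"
  proof
    fix y show "cst (Sup S) y = psup (cst ` S) y"
      unfolding cst_def psup_def by (simp add: image_image)
  qed
  moreover have "cst ` S \<subseteq> EE" using cst_E by blast
  ultimately show "Sup S \<in> pq Q \<longleftrightarrow> (\<exists>y\<in>S. y \<in> pq Q)"
    unfolding pq_def using eq_Sup[OF Q] by simp
qed

lemma exists_x: assumes Q: "frame_point EE LE Q" shows "\<exists>x\<in>C. hx x \<in> Q"
proof -
  have "psup (hx ` C) = cst top"
  proof
    fix y show "psup (hx ` C) y = cst top y"
    proof (cases "y \<in> C")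
      case True
      have "hx y y \<le> Sup ((\<lambda>h. h y) ` hx ` C)" using True by (auto intro: Sup_upper)
      then show ?thesis using True hx_self[OF True] unfolding psup_def cst_def by (simp add: top_le)
    qed (simp add: psup_def cst_def)
  qed
  moreover have "hx ` C \<subseteq> EE" using hx_E by blast
  ultimately show ?thesis using eq_Sup[OF Q, of "hx ` C"] eq_top[OF Q] by auto
qed

lemma hb: assumes h: "h \<in> EE" and b: "b \<in> B" and x: "x \<in> C" and y: "y \<in> C" and e: "bop b x y = y"
  shows "inf (h y) b = inf (h x) b"
proof -
  have "h y = sup (inf b (h x)) (inf (lcompl b) (h y))"
    using homD(1)[OF h b x y] e unfolding OL_bop_def by simp
  then have "inf b (h y) = inf b (sup (inf b (h x)) (inf (lcompl b) (h y)))" by simp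
  also have "\<dots> = sup (inf b (inf b (h x))) (inf b (inf (lcompl b) (h y)))" by (rule distr)
  also have "\<dots> = inf b (h x)"
    using lcompl(1)[OF b] by (simp add: inf_assoc[symmetric])
  finally show ?thesis by (simp add: inf_commute)
qed

lemma key: assumes h: "h \<in> EE" and x: "x \<in> C"
  shows "pinf h (hx x) = pinf (cst (h x)) (hx x)"
proof
  fix y show "pinf h (hx x) y = pinf (cst (h x)) (hx x) y"
  proof (cases "y \<in> C")
    case True
    have "inf (h y) (Sup (SS x y)) = Sup ((\<lambda>s. inf (h y) s) ` SS x y)" by (rule fl)
    also have "\<dots> = Sup ((\<lambda>s. inf (h x) s) ` SS x y)"
    proof (rule SUP_cong)
      fix s assume "s \<in> SS x y"
      then show "inf (h y) s = inf (h x) s" using hb[OF h _ x True] unfolding SS_def by auto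
    qed simp
    also have "\<dots> = inf (h x) (Sup (SS x y))" by (rule fl[symmetric])
    finally show ?thesis unfolding pinf_def cst_def using True x hx_app by simp
  qed (simp add: pinf_def)
qed

lemma Q_char: assumes Q: "frame_point EE LE Q" and x: "x \<in> C" and hQ: "hx x \<in> Q"
  shows "Q = {h \<in> EE. h x \<in> pq Q}"
proof -
  have "h \<in> Q \<longleftrightarrow> cst (h x) \<in> Q" if h: "h \<in> EE" for h
  proof -
    have "h \<in> Q \<longleftrightarrow> pinf h (hx x) \<in> Q" using eq_inf[OF Q h hx_E[OF x]] hQ by simp
    also have "\<dots> \<longleftrightarrow> pinf (cst (h x)) (hx x) \<in> Q" using key[OF h x] by simp
    also have "\<dots> \<longleftrightarrow> cst (h x) \<in> Q" using eq_inf[OF Q cst_E hx_E[OF x]] hQ by simp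
    finally show ?thesis .
  qed
  then show ?thesis using eq_sub[OF Q] unfolding pq_def by auto
qed


abbreviation "cls p x \<equiv> stalk_class C bop p x"

definition psi :: "('x \<Rightarrow> 'a) set \<Rightarrow> 'a set \<times> 'x set" where
  "psi Q = (pq Q, {y \<in> C. hx y \<in> Q})"

definition phi :: "'a set \<times> 'x set \<Rightarrow> ('x \<Rightarrow> 'a) set" where
  "phi z = {h \<in> EE. \<exists>x\<in>snd z. h x \<in> fst z}"

lemma equiv_p_iff: assumes p: "p \<in> locale_points" and x: "x \<in> C" and y: "y \<in> C"
  shows "equiv_p bop p x y \<longleftrightarrow> hx x y \<in> p"
  using lp_Sup[OF p, of "SS x y"] hx_app[OF y, of x]
  unfolding equiv_p_def equiv_b_def SS_def by auto

lemma equiv_refl: "p \<in> locale_points \<Longrightarrow> x \<in> C \<Longrightarrow> equiv_p bop p x x"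
  unfolding equiv_p_def equiv_b_def using lp_top top_B A1 by blast

lemma class_resp: assumes p: "p \<in> locale_points" and x: "x \<in> C" and x': "x' \<in> C"
  and e: "equiv_p bop p x x'" and h: "h \<in> EE"
  shows "h x \<in> p \<longleftrightarrow> h x' \<in> p"
proof -
  obtain b where b: "b \<in> B" "b \<in> p" "bop b x x' = x'"
    using e unfolding equiv_p_def equiv_b_def by blast
  have "inf (h x') b = inf (h x) b" using hb[OF h b(1) x x' b(3)] .
  then show ?thesis using lp_inf[OF p] b(2) by metis
qed

lemma phi_class: assumes p: "p \<in> locale_points" and x: "x \<in> C"
  shows "phi (p, cls p x) = {h \<in> EE. h x \<in> p}"
proof -
  have "x \<in> cls p x" unfolding stalk_class_def using equiv_refl[OF p x] x by simp
  moreover have "h x \<in> p" if "h \<in> EE" "y \<in> cls p x" "h y \<in> p" for h y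
    using that class_resp[OF p x, of y h] unfolding stalk_class_def by auto
  ultimately show ?thesis unfolding phi_def by auto
qed

lemma psi_Pp: assumes p: "p \<in> locale_points" and x: "x \<in> C"
  shows "psi {h \<in> EE. h x \<in> p} = (p, cls p x)"
proof -
  have "pq {h \<in> EE. h x \<in> p} = p" unfolding pq_def using cst_E x by (auto simp: cst_def)
  moreover have "{y \<in> C. hx y \<in> {h \<in> EE. h x \<in> p}} = cls p x"
    unfolding stalk_class_def using hx_E hx_sym[OF x] equiv_p_iff[OF p x] x by auto
  ultimately show ?thesis unfolding psi_def by simp
qed

lemma psi_Q: assumes Q: "frame_point EE LE Q" and x: "x \<in> C" and hQ: "hx x \<in> Q"
  shows "psi Q = (pq Q, cls (pq Q) x)"
  using psi_Pp[OF pq_point[OF Q] x] Q_char[OF Q x hQ] by simp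

abbreviation "PTS \<equiv> {Q. frame_point EE LE Q}"
abbreviation "SB \<equiv> {subbasic C bop x b | x b. x \<in> C \<and> b \<in> B}"
abbreviation "UB \<equiv> {{p. frame_point EE LE p \<and> u \<in> p} | u. u \<in> EE}"

lemma etale_eq: "etale_points C bop pop = subtopology (topology_generated_by UB) PTS"
  unfolding etale_points_def point_space_def by simp

lemma stalk_eq: "stalk_sum_space C bop = subtopology (topology_generated_by SB) (stalk_sum C bop)"
  unfolding stalk_sum_space_def by simp

lemma top_etale: "topspace (etale_points C bop pop) = PTS"
proof -
  have "PTS \<subseteq> \<Union>UB"
  proof
    fix Q assume "Q \<in> PTS"
    then have "Q \<in> {p. frame_point EE LE p \<and> cst top \<in> p}" using eq_top by auto
    then show "Q \<in> \<Union>UB" using cst_E by blast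
  qed
  then show ?thesis unfolding etale_eq by auto
qed

lemma stalk_sum_mem: "z \<in> stalk_sum C bop \<longleftrightarrow> (\<exists>p x. p \<in> locale_points \<and> x \<in> C \<and> z = (p, cls p x))"
  unfolding stalk_sum_def by auto

lemma top_stalk: "topspace (stalk_sum_space C bop) = stalk_sum C bop"
proof -
  have "stalk_sum C bop \<subseteq> \<Union>SB"
  proof
    fix z assume "z \<in> stalk_sum C bop"
    then obtain p x where px: "p \<in> locale_points" "x \<in> C" "z = (p, cls p x)"
      unfolding stalk_sum_mem by blast
    then have "z \<in> subbasic C bop x top" unfolding subbasic_def using lp_top by auto
    then show "z \<in> \<Union>SB" using px top_B by blast
  qed
  then show ?thesis unfolding stalk_eq by auto
qed

lemma psi_subbasic: assumes Q: "Q \<in> PTS" and x: "x \<in> C" and b: "b \<in> B"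
  shows "psi Q \<in> subbasic C bop x b \<longleftrightarrow> pinf (cst b) (hx x) \<in> Q"
proof
  assume "psi Q \<in> subbasic C bop x b"
  then obtain p where p: "p \<in> locale_points" "b \<in> p" "psi Q = (p, cls p x)"
    unfolding subbasic_def by blast
  then have pq: "pq Q = p" and cl: "{y \<in> C. hx y \<in> Q} = cls p x" unfolding psi_def by auto
  have "x \<in> cls p x" unfolding stalk_class_def using equiv_refl[OF p(1) x] x by simp
  then have "hx x \<in> Q" using cl by auto
  moreover have "cst b \<in> Q" using pq p(2) unfolding pq_def by auto
  ultimately show "pinf (cst b) (hx x) \<in> Q" using eq_inf Q cst_E hx_E[OF x] by auto
next
  assume "pinf (cst b) (hx x) \<in> Q"
  then have "cst b \<in> Q" "hx x \<in> Q" using eq_inf Q cst_E hx_E[OF x] by auto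
  then show "psi Q \<in> subbasic C bop x b"
    using psi_Q[of Q x] Q x pq_point[of Q] unfolding subbasic_def pq_def by auto
qed

lemma psi_in: assumes Q: "Q \<in> PTS" shows "psi Q \<in> stalk_sum C bop" "psi Q \<in> \<Union>SB" "phi (psi Q) = Q"
proof -
  obtain x where x: "x \<in> C" "hx x \<in> Q" using exists_x Q by auto
  have e: "psi Q = (pq Q, cls (pq Q) x)" using psi_Q Q x by auto
  show "psi Q \<in> stalk_sum C bop" unfolding stalk_sum_mem using e pq_point Q x by auto
  have "psi Q \<in> subbasic C bop x top" unfolding subbasic_def using e pq_point Q lp_top by auto
  then show "psi Q \<in> \<Union>SB" using x top_B by blast
  show "phi (psi Q) = Q" using e phi_class[OF pq_point x(1)] Q_char[OF _ x] Q by auto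
qed

lemma phi_in: assumes z: "z \<in> stalk_sum C bop" shows "phi z \<in> PTS" "phi z \<in> \<Union>UB" "psi (phi z) = z"
proof -
  obtain p x where px: "p \<in> locale_points" "x \<in> C" "z = (p, cls p x)"
    using z unfolding stalk_sum_mem by blast
  have e: "phi z = {h \<in> EE. h x \<in> p}" using phi_class px by simp
  show "phi z \<in> PTS" using e Pp_point px by simp
  then have "phi z \<in> {p. frame_point EE LE p \<and> cst top \<in> p}" using eq_top by auto
  then show "phi z \<in> \<Union>UB" using cst_E by blast
  show "psi (phi z) = z" using e psi_Pp px by simp
qed

lemma UP1: "\<exists>S \<subseteq> B. u = Sup S" for u :: 'a
  using UP unfolding ultraparacompact_def by blast

lemma main: "homeomorphic_maps (etale_points C bop pop) (stalk_sum_space C bop) psi phi"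
  unfolding homeomorphic_maps_def
proof (intro conjI ballI)
  show "continuous_map (etale_points C bop pop) (stalk_sum_space C bop) psi"
    unfolding stalk_eq
  proof (rule continuous_map_into_subtopology)
    show "psi \<in> topspace (etale_points C bop pop) \<rightarrow> stalk_sum C bop"
      unfolding top_etale using psi_in by blast
    show "continuous_map (etale_points C bop pop) (topology_generated_by SB) psi"
    proof (rule continuous_on_generated_topo)
      show "psi ` topspace (etale_points C bop pop) \<subseteq> \<Union>SB"
        unfolding top_etale using psi_in by blast
    next
      fix U assume "U \<in> SB"
      then obtain x b where xb: "x \<in> C" "b \<in> B" "U = subbasic C bop x b" by blast
      define m where "m = pinf (cst b) (hx x)"
      have mE: "m \<in> EE" unfolding m_def using pinf_E cst_E hx_E xb by blast
      have "psi -` U \<inter> topspace (etale_points C bop pop)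
          = {p. frame_point EE LE p \<and> m \<in> p} \<inter> PTS"
        unfolding top_etale
      proof (intro equalityI subsetI)
        fix Q assume "Q \<in> psi -` U \<inter> PTS"
        then have Q: "Q \<in> PTS" and "psi Q \<in> subbasic C bop x b" using xb by auto
        then have "m \<in> Q" unfolding m_def using psi_subbasic[OF Q xb(1,2)] by blast
        then show "Q \<in> {p. frame_point EE LE p \<and> m \<in> p} \<inter> PTS" using Q by blast
      next
        fix Q assume "Q \<in> {p. frame_point EE LE p \<and> m \<in> p} \<inter> PTS"
        then have Q: "Q \<in> PTS" and "m \<in> Q" by auto
        then have "psi Q \<in> subbasic C bop x b" unfolding m_def using psi_subbasic[OF Q xb(1,2)] by blast
        then show "Q \<in> psi -` U \<inter> PTS" using Q xb by blast
      qed
      moreover have "openin (topology_generated_by UB) {p. frame_point EE LE p \<and> m \<in> p}"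
        by (rule topology_generated_by_Basis) (use mE in blast)
      ultimately show "openin (etale_points C bop pop) (psi -` U \<inter> topspace (etale_points C bop pop))"
        unfolding etale_eq openin_subtopology by blast
    qed
  qed
next
  show "continuous_map (stalk_sum_space C bop) (etale_points C bop pop) phi"
    unfolding etale_eq
  proof (rule continuous_map_into_subtopology)
    show "phi \<in> topspace (stalk_sum_space C bop) \<rightarrow> PTS"
      unfolding top_stalk using phi_in by blast
    show "continuous_map (stalk_sum_space C bop) (topology_generated_by UB) phi"
    proof (rule continuous_on_generated_topo)
      show "phi ` topspace (stalk_sum_space C bop) \<subseteq> \<Union>UB"
        unfolding top_stalk using phi_in by blast
    next
      fix U assume "U \<in> UB"
      then obtain h where h: "h \<in> EE" "U = {p. frame_point EE LE p \<and> h \<in> p}" by blast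
      define W where "W = \<Union>{subbasic C bop y b | y b. y \<in> C \<and> b \<in> B \<and> b \<le> h y}"
      have "phi -` U \<inter> stalk_sum C bop = W \<inter> stalk_sum C bop"
      proof (intro equalityI subsetI)
        fix z assume z: "z \<in> phi -` U \<inter> stalk_sum C bop"
        then have "z \<in> stalk_sum C bop" by blast
        then obtain p x where px: "p \<in> locale_points" "x \<in> C" "z = (p, cls p x)"
          unfolding stalk_sum_mem by blast
        have "h \<in> phi z" using z h by auto
        then have hx: "h x \<in> p" using phi_class px by simp
        obtain S where S: "S \<subseteq> B" "h x = Sup S" using UP1 by blast
        then obtain b where b: "b \<in> S" "b \<in> p" using lp_Sup[OF px(1)] hx by auto
        have "b \<le> h x" using S b by (auto intro: Sup_upper)
        moreover have "z \<in> subbasic C bop x b" unfolding subbasic_def using px b by auto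
        ultimately have "z \<in> W" unfolding W_def using px S b by blast
        then show "z \<in> W \<inter> stalk_sum C bop" using z by blast
      next
        fix z assume z: "z \<in> W \<inter> stalk_sum C bop"
        then obtain y b where yb: "y \<in> C" "b \<in> B" "b \<le> h y" "z \<in> subbasic C bop y b"
          unfolding W_def by blast
        then obtain p where p: "p \<in> locale_points" "b \<in> p" "z = (p, cls p y)"
          unfolding subbasic_def by blast
        have "h y \<in> p" using lp_mono p yb by blast
        then have "h \<in> phi z" using phi_class p yb h by simp
        then show "z \<in> phi -` U \<inter> stalk_sum C bop" using h z phi_in by auto
      qed
      moreover have "openin (topology_generated_by SB) W"
        unfolding W_def by (rule openin_Union) (auto intro!: topology_generated_by_Basis)
      ultimately show "openin (stalk_sum_space C bop) (phi -` U \<inter> topspace (stalk_sum_space C bop))"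
        unfolding top_stalk unfolding stalk_eq openin_subtopology by blast
    qed
  qed
next
  fix Q assume "Q \<in> topspace (etale_points C bop pop)"
  then show "phi (psi Q) = Q" unfolding top_etale using psi_in by blast
next
  fix z assume "z \<in> topspace (stalk_sum_space C bop)"
  then show "psi (phi z) = z" unfolding top_stalk using phi_in by blast
qed

end

theorem proposition2p20:
  fixes C :: "'x set"
    and bop :: "'a::complete_lattice \<Rightarrow> 'x \<Rightarrow> 'x \<Rightarrow> 'x"
    and pop :: "'a set \<Rightarrow> ('a \<Rightarrow> 'x) \<Rightarrow> 'x"
  assumes "frame_law TYPE('a)"
    and "(bot::'a) \<noteq> top"
    and "ultraparacompact TYPE('a)"
    and "BJ_set C bop pop"
  shows "etale_points C bop pop homeomorphic_space stalk_sum_space C bop"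
proof -
  interpret bjctx C bop pop using assms(1,3,4) by unfold_locales
  show ?thesis unfolding homeomorphic_space_def using main by blast
qed

end
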